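(* Let $0\le r\le\infty$, let $f:V\to W$ be a smooth map between finite-dimensional real inner product spaces with $|f|_{[r]}<\infty$, let $\omega\in\mathcal B_k^r(W)$ and $J\in\mathcal N_k^r(V)$. Then $$\int_Jf^*\omega=\int_{f_*J}\omega.$$
   Context: For a simple $k$-vector $\alpha=w_1\wedge\dots\wedge w_k$, $M(\alpha)=\sqrt{\det\langle w_i,w_j\rangle}$. A monopolar $k$-chain in $V$ is a finite formal sum $\sum_i(p_i;\alpha_i)$, $p_i\in V$, $\alpha_i\in\Lambda_k(V)$, linear in the second slot at each point. $T_u(p;\alpha)=(p+u;\alpha)$, $\Delta_u=T_u-\mathrm{id}$, $\Delta^j_U=\Delta_{u_1}\circ\dots\circ\Delta_{u_j}$, $\|\Delta^j_U(p;\alpha)\|_j=|u_1|\cdots|u_j|M(\alpha)$. A $k$-form is a linear functional $\omega$ on monopolar $k$-chains; $\|\omega\|_0=\sup\{|\omega(p;\alpha)|:\alpha$ simple, $M(\alpha)=1\}$, $\|\omega\|_j=\sup\{|\omega(\Delta^j_U(p;\alpha))|:\|\Delta^j_U(p;\alpha)\|_j=1\}$, $|\omega|^{\natural_r}=\max_{0\le j\le r}\|\omega\|_j$, $\mathcal B_k^r$ = forms with finite norm. For a chain $P$, $|P|^{\natural_r}=\sup_{0\ne\omega\in\mathcal B_k^r}\omega(P)/|\omega|^{\natural_r}$; $\mathcal N_k^r$ is the completion of monopolar $k$-chains in this norm. For $J\in\mathcal N_k^r$, $\omega\in\mathcal B_k^r$: $\int_J\omega=\lim_i\omega(P_i)$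 for monopolar $P_i\to J$. Pushforward on chains: $f_*(x;v_1\wedge\dots\wedge v_k)=(f(x);Df_xv_1\wedge\dots\wedge Df_xv_k)$; $\|f\|_{[j]}=\sup|f_*\Delta^j_U(x;\alpha)|^{\natural_j}/\|\Delta^j_U(x;\alpha)\|_j$, $|f|_{[r]}=\max_{j\le r}\|f\|_{[j]}$; when $|f|_{[r]}<\infty$, $f_*$ extends continuously to chainlets, $f_*J=\lim f_*P_i$. Pullback: $f^*\omega(x;\alpha)=\omega(f_*(x;\alpha))$. *)

theory Defs
  imports "HOL-Analysis.Analysis" "HOL-Library.Extended_Nat"
begin

text \<open>A simple k-vector w_1 ^ ... ^ w_k is represented by the list [w_1,...,w_k]
  (length k).  A monopolar k-chain is represented by a finite list of monopoles
  (p, c, ws), standing for the formal sum of the terms (p; c w_1 ^ ... ^ w_k).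
  Every k-vector is a finite sum of simple ones, so every monopolar chain has
  such a representation.\<close>

type_synonym 'v monopole = "'v \<times> real \<times> 'v list"
type_synonym 'v mchain = "'v monopole list"

definition gram_det :: "'v::real_inner list \<Rightarrow> real" where
  "gram_det ws = (\<Sum>\<sigma> | \<sigma> permutes {..<length ws}.
      of_int (sign \<sigma>) * (\<Prod>i<length ws. inner (ws ! i) (ws ! \<sigma> i)))"

definition mass_simple :: "'v::real_inner list \<Rightarrow> real" where
  "mass_simple ws = sqrt (gram_det ws)"

definition is_mchain :: "nat \<Rightarrow> 'v mchain \<Rightarrow> bool" where
  "is_mchain k P \<longleftrightarrow> (\<forall>m\<in>set P. length (snd (snd m)) = k)"

definition chain_neg :: "'v mchain \<Rightarrow> 'v mchain" where
  "chain_neg P = map (\<lambda>(p, c, ws). (p, - c, ws)) P"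

definition chain_diff :: "'v mchain \<Rightarrow> 'v mchain \<Rightarrow> 'v mchain" where
  "chain_diff P Q = P @ chain_neg Q"

definition chain_translate :: "'v::real_vector \<Rightarrow> 'v mchain \<Rightarrow> 'v mchain" where
  "chain_translate u P = map (\<lambda>(p, c, ws). (p + u, c, ws)) P"

definition chain_Delta :: "'v::real_vector \<Rightarrow> 'v mchain \<Rightarrow> 'v mchain" where
  "chain_Delta u P = chain_diff (chain_translate u P) P"

fun chain_DeltaU :: "'v::real_vector list \<Rightarrow> 'v mchain \<Rightarrow> 'v mchain" where
  "chain_DeltaU [] P = P"
| "chain_DeltaU (u # U) P = chain_Delta u (chain_DeltaU U P)"

definition diff_cell :: "'v::real_vector list \<Rightarrow> 'v \<Rightarrow> 'v list \<Rightarrow> 'v mchain" where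
  "diff_cell U p ws = chain_DeltaU U [(p, 1, ws)]"

definition diff_cell_norm :: "'v::real_inner list \<Rightarrow> 'v list \<Rightarrow> real" where
  "diff_cell_norm U ws = (\<Prod>u\<leftarrow>U. norm u) * mass_simple ws"

text \<open>A k-form (linear functional on monopolar k-chains) is the same as a family,
  indexed by points p, of linear functionals on Lambda_k(V), i.e. of alternating
  k-linear forms.  We represent it by omega p [w_1,...,w_k] = omega(p; w_1^...^w_k),
  normalised to be 0 on lists of length different from k.\<close>

definition is_kform :: "nat \<Rightarrow> ('v::real_vector \<Rightarrow> 'v list \<Rightarrow> real) \<Rightarrow> bool" where
  "is_kform k \<omega> \<longleftrightarrow>
     (\<forall>p ws. length ws \<noteq> k \<longrightarrow> \<omega> p ws = 0) \<and>
     (\<forall>p ws i. length ws = k \<longrightarrow> i < k \<longrightarrow> linear (\<lambda>v. \<omega> p (ws[i := v]))) \<and>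
     (\<forall>p ws i j. length ws = k \<longrightarrow> i < k \<longrightarrow> j < k \<longrightarrow> i \<noteq> j \<longrightarrow> ws ! i = ws ! j
         \<longrightarrow> \<omega> p ws = 0)"

definition form_eval :: "('v \<Rightarrow> 'v list \<Rightarrow> real) \<Rightarrow> 'v mchain \<Rightarrow> real" where
  "form_eval \<omega> P = (\<Sum>(p, c, ws)\<leftarrow>P. c * \<omega> p ws)"

text \<open>||omega||_j = sup{ |omega(Delta^j_U(p;alpha))| : alpha simple,
  ||Delta^j_U(p;alpha)||_j = 1 } (for j = 0 this is ||omega||_0).  The value 0 is
  inserted so that the supremum of an empty set is 0.\<close>
definition form_jnorm :: "nat \<Rightarrow> nat \<Rightarrow> ('v::real_inner \<Rightarrow> 'v list \<Rightarrow> real) \<Rightarrow> ereal" where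
  "form_jnorm k j \<omega> = Sup (insert 0 {ereal \<bar>form_eval \<omega> (diff_cell U p ws)\<bar> | U p ws.
       length U = j \<and> length ws = k \<and> diff_cell_norm U ws = 1})"

definition form_norm :: "nat \<Rightarrow> enat \<Rightarrow> ('v::real_inner \<Rightarrow> 'v list \<Rightarrow> real) \<Rightarrow> ereal" where
  "form_norm k r \<omega> = (SUP j \<in> {j. enat j \<le> r}. form_jnorm k j \<omega>)"

definition Bform :: "nat \<Rightarrow> enat \<Rightarrow> ('v::real_inner \<Rightarrow> 'v list \<Rightarrow> real) \<Rightarrow> bool" where
  "Bform k r \<omega> \<longleftrightarrow> is_kform k \<omega> \<and> form_norm k r \<omega> < \<infinity>"

definition chain_norm :: "nat \<Rightarrow> enat \<Rightarrow> 'v::real_inner mchain \<Rightarrow> ereal" where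
  "chain_norm k r P = Sup (insert 0 {ereal (form_eval \<omega> P / real_of_ereal (form_norm k r \<omega>)) | \<omega>.
       Bform k r \<omega> \<and> (\<exists>p ws. \<omega> p ws \<noteq> 0)})"

text \<open>An element J of N_k^r (the completion) is represented by a Cauchy sequence
  of monopolar k-chains in the natural-r norm.\<close>
definition chain_Cauchy :: "nat \<Rightarrow> enat \<Rightarrow> (nat \<Rightarrow> 'v::real_inner mchain) \<Rightarrow> bool" where
  "chain_Cauchy k r P \<longleftrightarrow> (\<forall>i. is_mchain k (P i)) \<and>
     (\<forall>e>0. \<exists>N. \<forall>m\<ge>N. \<forall>n\<ge>N. chain_norm k r (chain_diff (P m) (P n)) < ereal e)"

text \<open>f is C^infinity: Frechet derivatives of all orders exist everywhere.
  D n x [h_1,...,h_n] is the n-th derivative at x applied to h_1,...,h_n.\<close>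
definition smooth_map :: "('a::real_normed_vector \<Rightarrow> 'b::real_normed_vector) \<Rightarrow> bool" where
  "smooth_map f \<longleftrightarrow> (\<exists>D :: nat \<Rightarrow> 'a \<Rightarrow> 'a list \<Rightarrow> 'b.
      (\<forall>x. D 0 x [] = f x) \<and>
      (\<forall>n us x. length us = n \<longrightarrow>
          ((\<lambda>y. D n y us) has_derivative (\<lambda>h. D (Suc n) x (h # us))) (at x)))"

definition push_chain :: "('a::real_normed_vector \<Rightarrow> 'b::real_normed_vector) \<Rightarrow> 'a mchain \<Rightarrow> 'b mchain" where
  "push_chain f P = map (\<lambda>(x, c, vs). (f x, c, map (frechet_derivative f (at x)) vs)) P"

definition map_jnorm :: "nat \<Rightarrow> nat \<Rightarrow> ('a::real_inner \<Rightarrow> 'b::real_inner) \<Rightarrow> ereal" where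
  "map_jnorm k j f = Sup (insert 0 {chain_norm k (enat j) (push_chain f (diff_cell U x ws))
        / ereal (diff_cell_norm U ws) | U x ws.
       length U = j \<and> length ws = k \<and> diff_cell_norm U ws \<noteq> 0})"

definition map_norm :: "nat \<Rightarrow> enat \<Rightarrow> ('a::real_inner \<Rightarrow> 'b::real_inner) \<Rightarrow> ereal" where
  "map_norm k r f = (SUP j \<in> {j. enat j \<le> r}. map_jnorm k j f)"

definition pullback :: "('a::real_normed_vector \<Rightarrow> 'b::real_normed_vector) \<Rightarrow> ('b \<Rightarrow> 'b list \<Rightarrow> real)
    \<Rightarrow> ('a \<Rightarrow> 'a list \<Rightarrow> real)" where
  "pullback f \<omega> = (\<lambda>x vs. \<omega> (f x) (map (frechet_derivative f (at x)) vs))"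

end

theory Submission
  imports Defs
begin

lemma fe_nil[simp]: "form_eval \<omega> [] = 0" by (simp add: form_eval_def)
lemma fe_cons[simp]: "form_eval \<omega> ((p,c,ws)#P) = c * \<omega> p ws + form_eval \<omega> P"
  by (simp add: form_eval_def)
lemma fe_append[simp]: "form_eval \<omega> (A@B) = form_eval \<omega> A + form_eval \<omega> B"
  by (simp add: form_eval_def)
lemma fe_neg[simp]: "form_eval \<omega> (chain_neg B) = - form_eval \<omega> B"
  by (induction B) (auto simp: chain_neg_def)
lemma fe_diff[simp]: "form_eval \<omega> (chain_diff A B) = form_eval \<omega> A - form_eval \<omega> B"
  by (simp add: chain_diff_def)
lemma fe_negform: "form_eval (\<lambda>p ws. - \<omega> p ws) P = - form_eval \<omega> P"
  by (induction P) auto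
lemma fe_pull: "form_eval (pullback f \<omega>) P = form_eval \<omega> (push_chain f P)"
  by (induction P) (auto simp: push_chain_def pullback_def)

lemma basis_reduce:
  fixes \<omega> :: "'w::euclidean_space \<Rightarrow> 'w list \<Rightarrow> real"
  assumes K: "is_kform k \<omega>" and B: "\<forall>bs. length bs = k \<longrightarrow> set bs \<subseteq> Basis \<longrightarrow> \<omega> p bs = 0"
  shows "n \<le> k \<Longrightarrow> \<forall>ws. length ws = k \<longrightarrow> (\<forall>i<k. n \<le> i \<longrightarrow> ws!i \<in> Basis) \<longrightarrow> \<omega> p ws = 0"
proof (induction n)
  case 0
  show ?case
  proof (intro allI impI)
    fix ws :: "'w list" assume l: "length ws = k" and h: "\<forall>i<k. 0 \<le> i \<longrightarrow> ws!i \<in> Basis"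
    have "set ws \<subseteq> Basis" using l h by (auto simp: in_set_conv_nth)
    then show "\<omega> p ws = 0" using B l by blast
  qed
next
  case (Suc n)
  show ?case
  proof (intro allI impI)
    fix ws :: "'w list" assume l: "length ws = k" and h: "\<forall>i<k. Suc n \<le> i \<longrightarrow> ws!i \<in> Basis"
    define m where "m = n"
    have mk: "m < k" using Suc.prems unfolding m_def by auto
    have lin: "linear (\<lambda>v. \<omega> p (ws[m := v]))" using K l mk unfolding is_kform_def by blast
    have "\<omega> p ws = \<omega> p (ws[m := (\<Sum>b\<in>Basis. (ws!m \<bullet> b) *\<^sub>R b)])"
      by (simp add: euclidean_representation)
    also have "\<dots> = (\<Sum>b\<in>Basis. (ws!m \<bullet> b) * \<omega> p (ws[m := b]))"
      using linear_sum[OF lin, of "\<lambda>b. (ws!m \<bullet> b) *\<^sub>R b" Basis] linear_scale[OF lin]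
      by simp
    also have "\<dots> = 0"
    proof (rule sum.neutral, intro ballI)
      fix b :: 'w assume b: "b \<in> Basis"
      have "\<omega> p (ws[m := b]) = 0"
        using Suc.IH[rule_format, of "ws[m:=b]"] Suc.prems l h b unfolding m_def
        by (auto simp: nth_list_update)
      then show "(ws!m \<bullet> b) * \<omega> p (ws[m := b]) = 0" by simp
    qed
    finally show "\<omega> p ws = 0" .
  qed
qed

lemma gram_basis:
  fixes bs :: "'w::euclidean_space list"
  assumes "set bs \<subseteq> Basis" "distinct bs"
  shows "gram_det bs = 1"
proof -
  let ?S = "{\<sigma>. \<sigma> permutes {..<length bs}}"
  let ?t = "\<lambda>\<sigma>. of_int (sign \<sigma>) * (\<Prod>i<length bs. inner (bs ! i) (bs ! \<sigma> i))"
  have fin: "finite ?S" by (simp add: finite_permutations)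
  have idS: "id \<in> ?S" by (simp add: permutes_id)
  have z: "?t \<sigma> = 0" if "\<sigma> \<in> ?S - {id}" for \<sigma>
  proof -
    from that have p: "\<sigma> permutes {..<length bs}" and ne: "\<sigma> \<noteq> id" by auto
    have "\<exists>i<length bs. \<sigma> i \<noteq> i"
    proof (rule ccontr)
      assume "\<not> ?thesis"
      then have "\<sigma> x = x" for x using p by (cases "x < length bs") (auto simp: permutes_def)
      then show False using ne by auto
    qed
    then obtain i where i: "i < length bs" "\<sigma> i \<noteq> i" by blast
    have si: "\<sigma> i < length bs" using permutes_in_image[OF p, of i] i(1) by simp
    have "bs ! i \<noteq> bs ! \<sigma> i" using assms(2) i si by (simp add: nth_eq_iff_index_eq)
    moreover have "bs ! i \<in> Basis" "bs ! \<sigma> i \<in> Basis" using assms(1) i si by auto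
    ultimately have "inner (bs ! i) (bs ! \<sigma> i) = 0" by (simp add: inner_not_same_Basis)
    then have "(\<Prod>i<length bs. inner (bs ! i) (bs ! \<sigma> i)) = 0"
      using i(1) by (intro prod_zero) auto
    then show ?thesis by simp
  qed
  have "gram_det bs = ?t id + sum ?t (?S - {id})"
    unfolding gram_det_def using sum.remove[OF fin idS, of ?t] by simp
  also have "sum ?t (?S - {id}) = 0" using z by (intro sum.neutral) blast
  also have "?t id = 1"
  proof -
    have "bs ! i \<in> Basis" if "i < length bs" for i using assms(1) that by auto
    then have "(\<Prod>i<length bs. inner (bs ! i) (bs ! i)) = 1" by (intro prod.neutral) auto
    then show ?thesis by (simp add: sign_id)
  qed
  finally show ?thesis by simp
qed

lemma nonzero_basis:
  fixes \<omega> :: "'w::euclidean_space \<Rightarrow> 'w list \<Rightarrow> real"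
  assumes K: "is_kform k \<omega>" and nz: "\<omega> p ws \<noteq> 0"
  shows "\<exists>bs. length bs = k \<and> set bs \<subseteq> Basis \<and> distinct bs \<and> \<omega> p bs \<noteq> 0"
proof -
  have l: "length ws = k" using K nz unfolding is_kform_def by metis
  obtain bs where bs: "length bs = k" "set bs \<subseteq> Basis" "\<omega> p bs \<noteq> 0"
    using basis_reduce[OF K, of p k] l nz by auto
  have "distinct bs"
  proof (rule ccontr)
    assume "\<not> distinct bs"
    then obtain i j where "i < length bs" "j < length bs" "i \<noteq> j" "bs ! i = bs ! j"
      by (auto simp: distinct_conv_nth)
    then have "\<omega> p bs = 0" using K bs(1) unfolding is_kform_def by metis
    then show False using bs(3) by simp
  qed
  then show ?thesis using bs by blast
qed

lemma form_jnorm_nonneg: "0 \<le> form_jnorm k j \<omega>"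
  unfolding form_jnorm_def by (rule Sup_upper) simp

lemma form_jnorm_le_norm: "enat j \<le> r \<Longrightarrow> form_jnorm k j \<omega> \<le> form_norm k r \<omega>"
  unfolding form_norm_def by (rule SUP_upper) simp

lemma form_norm_nonneg: "0 \<le> form_norm k r \<omega>"
  using form_jnorm_le_norm[of 0 r k \<omega>] form_jnorm_nonneg[of k 0 \<omega>] by (simp add: zero_enat_def[symmetric])

lemma form_norm_mono: "r \<le> s \<Longrightarrow> form_norm k r \<omega> \<le> form_norm k s \<omega>"
  unfolding form_norm_def by (rule SUP_subset_mono) auto

lemma chain_norm_nonneg: "0 \<le> chain_norm k r P"
  unfolding chain_norm_def by (rule Sup_upper) simp

lemma form_norm_pos:
  fixes \<omega> :: "'w::euclidean_space \<Rightarrow> 'w list \<Rightarrow> real"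
  assumes "Bform k r \<omega>" "\<omega> p ws \<noteq> 0"
  shows "0 < form_norm k r \<omega>"
proof -
  have K: "is_kform k \<omega>" using assms(1) by (simp add: Bform_def)
  obtain bs where bs: "length bs = k" "set bs \<subseteq> Basis" "distinct bs" "\<omega> p bs \<noteq> 0"
    using nonzero_basis[OF K assms(2)] by blast
  have m: "mass_simple bs = 1" using gram_basis[OF bs(2,3)] by (simp add: mass_simple_def)
  have "ereal \<bar>form_eval \<omega> (diff_cell [] p bs)\<bar> \<le> form_jnorm k 0 \<omega>"
    unfolding form_jnorm_def
    by (rule Sup_upper) (use m bs(1) in \<open>auto simp: diff_cell_norm_def intro!: exI[of _ "[]"]\<close>)
  moreover have "form_eval \<omega> (diff_cell [] p bs) = \<omega> p bs" by (simp add: diff_cell_def)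
  ultimately have "0 < form_jnorm k 0 \<omega>" using bs(4)
    by (metis zero_less_abs_iff ereal_less(2) order_less_le_trans)
  then show ?thesis using form_jnorm_le_norm[of 0 r k \<omega>] by (simp add: zero_enat_def[symmetric])
qed

lemma neg_kform: "is_kform k \<omega> \<Longrightarrow> is_kform k (\<lambda>p ws. - \<omega> p ws)"
  unfolding is_kform_def by (auto intro: linear_compose_neg)

lemma neg_form_norm: "form_norm k r (\<lambda>p ws. - \<omega> p ws) = form_norm k r \<omega>"
  unfolding form_norm_def form_jnorm_def by (simp add: fe_negform)

lemma bound:
  fixes \<omega> :: "'w::euclidean_space \<Rightarrow> 'w list \<Rightarrow> real"
  assumes B: "Bform k r \<omega>" and fin: "chain_norm k r P < \<infinity>"
  shows "\<bar>form_eval \<omega> P\<bar> \<le> real_of_ereal (chain_norm k r P) * real_of_ereal (form_norm k r \<omega>)"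
proof (cases "\<exists>p ws. \<omega> p ws \<noteq> 0")
  case False
  then have "form_eval \<omega> P = 0" by (induction P) auto
  moreover have "0 \<le> real_of_ereal (chain_norm k r P)" "0 \<le> real_of_ereal (form_norm k r \<omega>)"
    by (simp_all add: real_of_ereal_pos chain_norm_nonneg form_norm_nonneg)
  ultimately show ?thesis by simp
next
  case True
  then obtain p ws where nz: "\<omega> p ws \<noteq> 0" by blast
  define N where "N = real_of_ereal (form_norm k r \<omega>)"
  define c where "c = real_of_ereal (chain_norm k r P)"
  have "0 < form_norm k r \<omega>" using form_norm_pos[OF B nz] .
  moreover have "form_norm k r \<omega> < \<infinity>" using B by (simp add: Bform_def)
  ultimately have Npos: "0 < N" unfolding N_def by (cases "form_norm k r \<omega>") auto
  have ce: "chain_norm k r P = ereal c" unfolding c_def using fin chain_norm_nonneg[of k r P]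
    by (cases "chain_norm k r P") auto
  have B2: "Bform k r (\<lambda>p ws. - \<omega> p ws)" using B neg_kform[of k \<omega>] neg_form_norm[of k r \<omega>] by (simp add: Bform_def)
  have "ereal (form_eval \<omega> P / N) \<le> chain_norm k r P"
    unfolding chain_norm_def N_def
    apply (rule Sup_upper, rule insertI2, simp only: mem_Collect_eq)
    apply (rule exI[of _ \<omega>])
    using B nz by blast
  moreover have "ereal (form_eval (\<lambda>p ws. - \<omega> p ws) P / N) \<le> chain_norm k r P"
  proof -
    have NN: "N = real_of_ereal (form_norm k r (\<lambda>p ws. - \<omega> p ws))"
      unfolding N_def by (simp only: neg_form_norm)
    show ?thesis
      unfolding chain_norm_def NN
      apply (rule Sup_upper, rule insertI2, simp only: mem_Collect_eq)
      apply (rule exI[of _ "\<lambda>p ws. - \<omega> p ws"])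
      using B2 nz by auto
  qed
  ultimately have "form_eval \<omega> P / N \<le> c" "- form_eval \<omega> P / N \<le> c"
    using ce by (auto simp: fe_negform)
  then have a: "form_eval \<omega> P / N \<le> c" "(- form_eval \<omega> P) / N \<le> c"
    by (metis minus_divide_left)+
  have "form_eval \<omega> P \<le> c * N" "- form_eval \<omega> P \<le> c * N"
    using a Npos by (simp_all only: pos_divide_le_eq)
  then show ?thesis unfolding c_def N_def by linarith
qed

lemma smooth_diff: "smooth_map f \<Longrightarrow> f differentiable (at x)"
proof -
  assume "smooth_map f"
  then obtain D :: "nat \<Rightarrow> 'a \<Rightarrow> 'a list \<Rightarrow> 'b" where D: "\<forall>x. D 0 x [] = f x"
    "\<forall>n us x. length us = n \<longrightarrow> ((\<lambda>y. D n y us) has_derivative (\<lambda>h. D (Suc n) x (h # us))) (at x)"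
    unfolding smooth_map_def by blast
  have e: "(\<lambda>y. D 0 y []) = f" using D(1) by auto
  have "((\<lambda>y. D 0 y []) has_derivative (\<lambda>h. D (Suc 0) x [h])) (at x)" using D(2)[rule_format, of "[]" 0 x] by simp
  then show ?thesis unfolding e by (rule differentiableI)
qed

lemma pull_kform:
  fixes f :: "'v::euclidean_space \<Rightarrow> 'w::euclidean_space"
  assumes S: "smooth_map f" and K: "is_kform k \<omega>"
  shows "is_kform k (pullback f \<omega>)"
proof -
  have L: "linear (frechet_derivative f (at x))" for x
    using smooth_diff[OF S] by (rule linear_frechet_derivative)
  show ?thesis
    unfolding is_kform_def
  proof (intro conjI allI impI)
    fix p ws assume "length (ws :: 'v list) \<noteq> k"
    then show "pullback f \<omega> p ws = 0" using K unfolding is_kform_def pullback_def by simp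
  next
    fix p and ws :: "'v list" and i assume l: "length ws = k" and i: "i < k"
    have "linear (\<lambda>u. \<omega> (f p) ((map (frechet_derivative f (at p)) ws)[i := u]))"
      using K l i unfolding is_kform_def by simp
    then have "linear ((\<lambda>u. \<omega> (f p) ((map (frechet_derivative f (at p)) ws)[i := u])) \<circ> frechet_derivative f (at p))"
      using L by (rule linear_compose[rotated])
    then show "linear (\<lambda>v. pullback f \<omega> p (ws[i := v]))"
      unfolding pullback_def by (simp add: map_update o_def)
  next
    fix p and ws :: "'v list" and i j assume "length ws = k" "i < k" "j < k" "i \<noteq> j" "ws ! i = ws ! j"
    then show "pullback f \<omega> p ws = 0" using K unfolding is_kform_def pullback_def
      by (metis length_map nth_map)
  qed
qed

lemma map_jnorm_nonneg: "0 \<le> map_jnorm k j f"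
  unfolding map_jnorm_def by (rule Sup_upper) simp

lemma map_norm_nonneg: "0 \<le> map_norm k r f"
  unfolding map_norm_def
  using map_jnorm_nonneg[of k 0 f] SUP_upper[of 0 "{j. enat j \<le> r}" "\<lambda>j. map_jnorm k j f"]
  by (simp add: zero_enat_def[symmetric])

lemma pull_norm:
  fixes f :: "'v::euclidean_space \<Rightarrow> 'w::euclidean_space"
  assumes S: "smooth_map f" and MF: "map_norm k r f < \<infinity>" and B: "Bform k r \<omega>"
  shows "form_norm k r (pullback f \<omega>) \<le> ereal (real_of_ereal (map_norm k r f) * real_of_ereal (form_norm k r \<omega>))"
proof -
  define M where "M = real_of_ereal (map_norm k r f)"
  define W where "W = real_of_ereal (form_norm k r \<omega>)"
  have M0: "0 \<le> M" unfolding M_def by (simp add: real_of_ereal_pos map_norm_nonneg)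
  have W0: "0 \<le> W" unfolding W_def by (simp add: real_of_ereal_pos form_norm_nonneg)
  have Wfin: "form_norm k r \<omega> \<noteq> \<infinity>" using B by (simp add: Bform_def)
  have "form_norm k r (pullback f \<omega>) \<le> ereal (M * W)"
    unfolding form_norm_def
  proof (rule SUP_least)
    fix j assume "j \<in> {j. enat j \<le> r}"
    then have jr: "enat j \<le> r" by simp
    show "form_jnorm k j (pullback f \<omega>) \<le> ereal (M * W)"
      unfolding form_jnorm_def
    proof (rule Sup_least, goal_cases)
      case (1 x)
      then consider "x = 0" | U p ws where "x = ereal \<bar>form_eval (pullback f \<omega>) (diff_cell U p ws)\<bar>"
        "length U = j" "length ws = k" "diff_cell_norm U ws = 1" by blast
      then show "x \<le> ereal (M * W)"
      proof cases
        case 1 then show ?thesis using M0 W0 by simp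
      next
        case 2
        let ?C = "push_chain f (diff_cell U p ws)"
        have Bj: "Bform k (enat j) \<omega>"
          using B form_norm_mono[OF jr, of k \<omega>] by (auto simp: Bform_def)
        have c1: "chain_norm k (enat j) ?C \<le> map_jnorm k j f"
          unfolding map_jnorm_def
          apply (rule Sup_upper, rule insertI2, simp only: mem_Collect_eq)
          using 2 by (intro exI[of _ U] exI[of _ p] exI[of _ ws]) (simp add: one_ereal_def[symmetric])
        have c2: "map_jnorm k j f \<le> map_norm k r f"
          unfolding map_norm_def by (rule SUP_upper) (simp add: jr)
        have cfin: "chain_norm k (enat j) ?C < \<infinity>" using c1 c2 MF by (metis ereal_infty_less(1) order_le_less_trans)
        have "\<bar>form_eval \<omega> ?C\<bar> \<le> real_of_ereal (chain_norm k (enat j) ?C) * real_of_ereal (form_norm k (enat j) \<omega>)"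
          by (rule bound[OF Bj cfin])
        also have "\<dots> \<le> M * W"
        proof (rule mult_mono)
          show "real_of_ereal (chain_norm k (enat j) ?C) \<le> M" unfolding M_def
            using c1 c2 MF chain_norm_nonneg by (intro real_of_ereal_positive_mono) auto
          show "real_of_ereal (form_norm k (enat j) \<omega>) \<le> W" unfolding W_def
            using form_norm_mono[OF jr, of k \<omega>] Wfin form_norm_nonneg by (intro real_of_ereal_positive_mono) auto
          show "0 \<le> M" by (rule M0)
          show "0 \<le> real_of_ereal (form_norm k (enat j) \<omega>)"
            by (simp add: real_of_ereal_pos form_norm_nonneg)
        qed
        finally show ?thesis using 2 by (simp add: fe_pull)
      qed
    qed
  qed
  then show ?thesis unfolding M_def W_def .
qed

theorem mainTheorem11:
  fixes f :: "'v::euclidean_space \<Rightarrow> 'w::euclidean_space"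
    and r :: enat and k :: nat
    and \<omega> :: "'w \<Rightarrow> 'w list \<Rightarrow> real"
    and P :: "nat \<Rightarrow> 'v mchain" and Q :: "nat \<Rightarrow> 'w mchain"
  assumes "smooth_map f"
    and "map_norm k r f < \<infinity>"
    and "Bform k r \<omega>"
    and "chain_Cauchy k r P"
    and "\<forall>i. is_mchain k (Q i)"
    and "(\<lambda>i. chain_norm k r (chain_diff (Q i) (push_chain f (P i)))) \<longlonglongrightarrow> 0"
  shows "Bform k r (pullback f \<omega>) \<and>
         (\<exists>L. (\<lambda>i. form_eval (pullback f \<omega>) (P i)) \<longlonglongrightarrow> L \<and>
              (\<lambda>i. form_eval \<omega> (Q i)) \<longlonglongrightarrow> L)"
proof -
  define g where "g = pullback f \<omega>"
  have K: "is_kform k \<omega>" using assms(3) by (simp add: Bform_def)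
  have gn: "form_norm k r g \<le> ereal (real_of_ereal (map_norm k r f) * real_of_ereal (form_norm k r \<omega>))"
    unfolding g_def by (rule pull_norm[OF assms(1,2,3)])
  have Bg: "Bform k r g" unfolding Bform_def g_def
    using pull_kform[OF assms(1) K] gn by (auto simp: g_def intro: le_less_trans)
  define C where "C = real_of_ereal (form_norm k r g)"
  have C0: "0 \<le> C" unfolding C_def by (simp add: real_of_ereal_pos form_norm_nonneg)
  define W where "W = real_of_ereal (form_norm k r \<omega>)"
  have W0: "0 \<le> W" unfolding W_def by (simp add: real_of_ereal_pos form_norm_nonneg)
  define h where "h i = form_eval g (P i)" for i
  have "Cauchy h"
  proof (rule CauchyI)
    fix e :: real assume e: "0 < e"
    then have "0 < e / (C + 1)" using C0 by simp
    then obtain N where N: "\<forall>m\<ge>N. \<forall>n\<ge>N. chain_norm k r (chain_diff (P m) (P n)) < ereal (e / (C + 1))"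
      using assms(4) unfolding chain_Cauchy_def by blast
    show "\<exists>M. \<forall>m\<ge>M. \<forall>n\<ge>M. norm (h m - h n) < e"
    proof (intro exI[of _ N] allI impI)
      fix m n assume mn: "N \<le> m" "N \<le> n"
      let ?a = "chain_norm k r (chain_diff (P m) (P n))"
      have lt: "?a < ereal (e / (C + 1))" using N mn by blast
      then have fin: "?a < \<infinity>" by (metis ereal_infty_less(1) ereal_less_eq(1) not_le)
      have ra: "real_of_ereal ?a < e / (C + 1)"
        using lt fin chain_norm_nonneg[of k r "chain_diff (P m) (P n)"]
        by (cases ?a) auto
      have ra0: "0 \<le> real_of_ereal ?a" by (simp add: real_of_ereal_pos chain_norm_nonneg)
      have "norm (h m - h n) = \<bar>form_eval g (chain_diff (P m) (P n))\<bar>" by (simp add: h_def)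
      also have "\<dots> \<le> real_of_ereal ?a * C" unfolding C_def by (rule bound[OF Bg fin])
      also have "\<dots> \<le> e / (C + 1) * C" using ra C0 by (intro mult_right_mono) auto
      also have "\<dots> < e" using C0 e by (simp add: field_simps)
      finally show "norm (h m - h n) < e" .
    qed
  qed
  then obtain L where hL: "h \<longlonglongrightarrow> L" by (auto simp: Cauchy_convergent_iff convergent_def)
  define a where "a i = chain_norm k r (chain_diff (Q i) (push_chain f (P i)))" for i
  have a0: "a \<longlonglongrightarrow> ereal 0" using assms(6) unfolding a_def by (simp add: zero_ereal_def)
  then have ra0: "(\<lambda>i. real_of_ereal (a i)) \<longlonglongrightarrow> 0" by (rule lim_real_of_ereal)
  have ev: "eventually (\<lambda>i. a i < ereal 1) sequentially"
    using a0 by (rule order_tendstoD) simp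
  have dlim: "(\<lambda>i. form_eval \<omega> (Q i) - h i) \<longlonglongrightarrow> 0"
  proof (rule Lim_null_comparison)
    show "eventually (\<lambda>i. norm (form_eval \<omega> (Q i) - h i) \<le> real_of_ereal (a i) * W) sequentially"
      using ev
    proof eventually_elim
      case (elim i)
      then have fin: "a i < \<infinity>" by (metis ereal_infty_less(1) ereal_less_eq(1) not_le)
      have "norm (form_eval \<omega> (Q i) - h i) = \<bar>form_eval \<omega> (chain_diff (Q i) (push_chain f (P i)))\<bar>"
        by (simp add: h_def g_def fe_pull)
      also have "\<dots> \<le> real_of_ereal (a i) * W" unfolding a_def W_def
        by (rule bound[OF assms(3)]) (use fin in \<open>simp add: a_def\<close>)
      finally show ?case .
    qed
    show "(\<lambda>i. real_of_ereal (a i) * W) \<longlonglongrightarrow> 0"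
      using tendsto_mult_left_zero[OF ra0, of W] by simp
  qed
  have "(\<lambda>i. (form_eval \<omega> (Q i) - h i) + h i) \<longlonglongrightarrow> 0 + L"
    by (rule tendsto_add[OF dlim hL])
  then have "(\<lambda>i. form_eval \<omega> (Q i)) \<longlonglongrightarrow> L" by simp
  then show ?thesis using Bg hL unfolding g_def h_def by blast
qed

end
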